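(* Let $(A,B,E)$ be a finite bipartite graph and let $\alpha\in(0,1)$. Let $T\subseteq A$ be $\alpha$-separable, i.e., there exist $S\subseteq B$ with $|S|\ge\alpha|B|$ and disjoint subsets $T_0',T_1'\subseteq T$ with $|T_0'|\ge\alpha|T|$, $|T_1'|\ge\alpha|T|$ and $|d(S,T_0')-d(S,T_1')|\ge\alpha$. Then there are $S\subseteq B$ with $|S|\geq \alpha|B|$, subsets $T_0,T_1 \subseteq T$ with $|T_0|,|T_1| \ge \frac12\alpha^2|T|$, and real numbers $d_0,d_1$ with $d_1-d_0 \geq\frac{\alpha}{4}|S|$, such that every $h\in T_0$ satisfies $e(h,S)\leq d_0$ and every $h \in T_1$ satisfies $e(h,S)\geq d_1$.
   Context: For a bipartite graph $(A,B,E)$ and sets $S\subseteq B$, $T\subseteq A$, $e(S,T)$ (also written $e(T,S)$) denotes the number of edges with one endpoint in $S$ and the other in $T$; for a single vertex $h$ we write $e(h,S)=e(\{h\},S)$. The density is $d(S,T)=\frac{e(S,T)}{|S||T|}$. *)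

theory Defs
  imports Complex_Main
begin

definition edges_between :: "('a \<times> 'b) set \<Rightarrow> 'b set \<Rightarrow> 'a set \<Rightarrow> nat" where
  "edges_between E S T = card {(a, b) \<in> E. a \<in> T \<and> b \<in> S}"

definition density :: "('a \<times> 'b) set \<Rightarrow> 'b set \<Rightarrow> 'a set \<Rightarrow> real" where
  "density E S T = real (edges_between E S T) / (real (card S) * real (card T))"

definition separable :: "'a set \<Rightarrow> 'b set \<Rightarrow> ('a \<times> 'b) set \<Rightarrow> real \<Rightarrow> 'a set \<Rightarrow> bool" where
  "separable A B E \<alpha> T \<longleftrightarrow>
     (\<exists>S T0 T1. S \<subseteq> B \<and> real (card S) \<ge> \<alpha> * real (card B) \<and>
        T0 \<subseteq> T \<and> T1 \<subseteq> T \<and> T0 \<inter> T1 = {} \<and>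
        real (card T0) \<ge> \<alpha> * real (card T) \<and> real (card T1) \<ge> \<alpha> * real (card T) \<and>
        \<bar>density E S T0 - density E S T1\<bar> \<ge> \<alpha>)"

end

theory Submission
  imports Defs
begin

lemma low_part:
  fixes f :: "'a \<Rightarrow> real"
  assumes fin: "finite P" and nn: "\<forall>h\<in>P. 0 \<le> f h" and a0: "0 < \<alpha>" and a1: "\<alpha> < 1"
  shows "\<alpha>/2 * real (card P) \<le> real (card {h\<in>P. f h \<le> 2*(\<Sum>h\<in>P. f h)/((2-\<alpha>)*real (card P))})"
proof -
  define n where "n = real (card P)"
  define \<sigma> where "\<sigma> = (\<Sum>h\<in>P. f h)"
  define D where "D = 2*\<sigma>/((2-\<alpha>)*n)"
  define K where "K = {h\<in>P. f h \<le> D}"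
  have KP: "K \<subseteq> P" unfolding K_def by auto
  have finK: "finite K" using fin KP finite_subset by blast
  have cardPK: "real (card (P - K)) = n - real (card K)"
    using card_Diff_subset[OF finK KP] card_mono[OF fin KP] unfolding n_def by simp
  show ?thesis
  proof (cases "P - K = {}")
    case True
    hence "K = P" using KP by auto
    moreover have "\<alpha>/2 * n \<le> n" using a0 a1 unfolding n_def using mult_right_mono[of "\<alpha>/2" 1 "real (card P)"] by simp
    ultimately show ?thesis unfolding K_def D_def \<sigma>_def n_def by simp
  next
    case False
    have D0: "0 \<le> D" unfolding D_def \<sigma>_def n_def using nn a1
      by (auto intro!: divide_nonneg_nonneg sum_nonneg mult_nonneg_nonneg)
    have "(\<Sum>h\<in>P-K. D) < (\<Sum>h\<in>P-K. f h)"
      using False fin by (intro sum_strict_mono) (auto simp: K_def)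
    also have "\<dots> \<le> \<sigma>" unfolding \<sigma>_def
      using nn fin by (intro sum_mono2) auto
    finally have lt: "real (card (P-K)) * D < \<sigma>" by simp
    have npos: "n > 0" unfolding n_def using False fin card_gt_0_iff by fastforce
    have "0 \<le> real (card (P-K)) * D" using D0 by simp
    hence sp: "\<sigma> > 0" using lt by linarith
    define X where "X = (2-\<alpha>)*n"
    have Xp: "X > 0" unfolding X_def using a1 npos by simp
    have "real (card (P-K)) * D * X = real (card (P-K)) * (2*\<sigma>)"
      unfolding D_def X_def[symmetric] using Xp by simp
    moreover have "real (card (P-K)) * D * X < \<sigma> * X" using lt Xp by simp
    ultimately have "real (card (P-K)) * (2*\<sigma>) < \<sigma> * X" by linarith
    hence "\<sigma> * (real (card (P-K)) * 2) < \<sigma> * X" by (simp add: algebra_simps)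
    hence "real (card (P-K)) * 2 < (2-\<alpha>)*n" using sp unfolding X_def by simp
    hence "\<alpha>/2 * n \<le> real (card K)" using cardPK by (simp add: algebra_simps)
    thus ?thesis unfolding n_def K_def D_def \<sigma>_def by simp
  qed
qed

lemma edge_sum:
  assumes "finite E" "finite P"
  shows "edges_between E S P = (\<Sum>h\<in>P. edges_between E S {h})"
proof -
  have eq: "{(a, b) \<in> E. a \<in> P \<and> b \<in> S} = (\<Union>h\<in>P. {(a, b) \<in> E. a \<in> {h} \<and> b \<in> S})" by auto
  have "card (\<Union>h\<in>P. {(a, b) \<in> E. a \<in> {h} \<and> b \<in> S}) = (\<Sum>h\<in>P. card {(a, b) \<in> E. a \<in> {h} \<and> b \<in> S})"
    using assms by (intro card_UN_disjoint) (auto intro: rev_finite_subset[OF assms(1)])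
  thus ?thesis unfolding edges_between_def eq by simp
qed

lemma edge_le:
  assumes "finite S"
  shows "edges_between E S {h} \<le> card S"
proof -
  have "{(a, b) \<in> E. a \<in> {h} \<and> b \<in> S} \<subseteq> (\<lambda>b. (h,b)) ` S" by auto
  hence "card {(a, b) \<in> E. a \<in> {h} \<and> b \<in> S} \<le> card ((\<lambda>b. (h,b)) ` S)"
    using assms by (intro card_mono) auto
  also have "\<dots> \<le> card S" using card_image_le assms by blast
  finally show ?thesis unfolding edges_between_def .
qed

lemma core:
  fixes A :: "'a set" and B :: "'b set" and E :: "('a \<times> 'b) set" and \<alpha> :: real and T :: "'a set"
  assumes "finite A" and "finite B" and "E \<subseteq> A \<times> B"
    and a0: "0 < \<alpha>" and a1: "\<alpha> < 1"
    and "T \<subseteq> A" and SB: "S \<subseteq> B" and Sc: "real (card S) \<ge> \<alpha> * real (card B)"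
    and PT: "P \<subseteq> T" and QT: "Q \<subseteq> T"
    and Pc: "real (card P) \<ge> \<alpha> * real (card T)" and Qc: "real (card Q) \<ge> \<alpha> * real (card T)"
    and dd: "density E S Q - density E S P \<ge> \<alpha>"
  shows "\<exists>S T0 T1 (d0::real) (d1::real).
           S \<subseteq> B \<and> real (card S) \<ge> \<alpha> * real (card B) \<and>
           T0 \<subseteq> T \<and> T1 \<subseteq> T \<and>
           real (card T0) \<ge> 1/2 * \<alpha>^2 * real (card T) \<and>
           real (card T1) \<ge> 1/2 * \<alpha>^2 * real (card T) \<and>
           d1 - d0 \<ge> \<alpha> / 4 * real (card S) \<and>
           (\<forall>h\<in>T0. real (edges_between E S {h}) \<le> d0) \<and>
           (\<forall>h\<in>T1. real (edges_between E S {h}) \<ge> d1)"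
proof -
  have finE: "finite E" using assms(1,2,3) finite_subset by blast
  have finS: "finite S" using SB assms(2) finite_subset by blast
  have finT: "finite T" using assms(1,6) finite_subset by blast
  have finP: "finite P" using PT finT finite_subset by blast
  have finQ: "finite Q" using QT finT finite_subset by blast
  define s where "s = real (card S)"
  define f where "f = (\<lambda>h. real (edges_between E S {h}))"
  define nP where "nP = real (card P)"
  define nQ where "nQ = real (card Q)"
  define \<sigma>P where "\<sigma>P = (\<Sum>h\<in>P. f h)"
  define \<sigma>Q where "\<sigma>Q = (\<Sum>h\<in>Q. f h)"
  have dP: "density E S P = \<sigma>P / (s * nP)"
    unfolding density_def \<sigma>P_def f_def s_def nP_def using edge_sum[OF finE finP] by simp
  have dQ: "density E S Q = \<sigma>Q / (s * nQ)"
    unfolding density_def \<sigma>Q_def f_def s_def nQ_def using edge_sum[OF finE finQ] by simp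
  have f0: "\<forall>h. 0 \<le> f h" unfolding f_def by simp
  have fs: "\<forall>h. f h \<le> s" unfolding f_def s_def by (auto intro: edge_le[OF finS])
  have \<sigma>P0: "\<sigma>P \<ge> 0" unfolding \<sigma>P_def using f0 by (simp add: sum_nonneg)
  have \<sigma>Q0: "\<sigma>Q \<ge> 0" unfolding \<sigma>Q_def using f0 by (simp add: sum_nonneg)
  have sp: "s > 0"
  proof (rule ccontr)
    assume "\<not> s > 0" hence "s = 0" unfolding s_def by simp
    thus False using dd dP dQ a0 by simp
  qed
  have nQp: "nQ > 0"
  proof (rule ccontr)
    assume "\<not> nQ > 0" hence "nQ = 0" unfolding nQ_def by simp
    moreover have "density E S P \<ge> 0" using dP \<sigma>P0 sp unfolding nP_def by simp
    ultimately show False using dd dQ a0 by simp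
  qed
  have "card T > 0" using nQp QT finT unfolding nQ_def
    by (metis card_mono gr_zeroI le_zero_eq of_nat_0 order_less_irrefl)
  hence nPp: "nP > 0" using Pc a0 unfolding nP_def by (smt (verit) mult_pos_pos of_nat_0_less_iff)
  define d0 where "d0 = 2*\<sigma>P/((2-\<alpha>)*nP)"
  define g where "g = (\<lambda>h. s - f h)"
  define d1 where "d1 = s - 2*(\<Sum>h\<in>Q. g h)/((2-\<alpha>)*nQ)"
  define T0 where "T0 = {h\<in>P. f h \<le> d0}"
  define T1 where "T1 = {h\<in>Q. g h \<le> 2*(\<Sum>h\<in>Q. g h)/((2-\<alpha>)*nQ)}"
  have c0: "\<alpha>/2 * nP \<le> real (card T0)"
    using low_part[OF finP _ a0 a1, of f] f0 unfolding T0_def d0_def \<sigma>P_def nP_def by simp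
  have c1: "\<alpha>/2 * nQ \<le> real (card T1)"
    using low_part[OF finQ _ a0 a1, of g] fs unfolding T1_def nQ_def g_def by simp
  have "\<alpha>/2 * nP \<ge> \<alpha>/2 * (\<alpha> * real (card T))" using Pc a0 unfolding nP_def by simp
  hence C0: "real (card T0) \<ge> 1/2 * \<alpha>^2 * real (card T)" using c0 by (simp add: power2_eq_square)
  have "\<alpha>/2 * nQ \<ge> \<alpha>/2 * (\<alpha> * real (card T))" using Qc a0 unfolding nQ_def by simp
  hence C1: "real (card T1) \<ge> 1/2 * \<alpha>^2 * real (card T)" using c1 by (simp add: power2_eq_square)
  have sg: "(\<Sum>h\<in>Q. g h) = s * nQ - \<sigma>Q" unfolding g_def \<sigma>Q_def nQ_def
    by (simp add: sum_subtractf)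
  define \<mu>P where "\<mu>P = \<sigma>P / nP"
  define \<mu>Q where "\<mu>Q = \<sigma>Q / nQ"
  have "\<sigma>Q / (s * nQ) - \<sigma>P / (s * nP) = (\<mu>Q - \<mu>P) / s"
    unfolding \<mu>P_def \<mu>Q_def using sp nQp nPp by (simp add: field_simps)
  hence "(\<mu>Q - \<mu>P) / s \<ge> \<alpha>" using dd dP dQ by simp
  hence gap: "\<mu>Q - \<mu>P \<ge> \<alpha> * s" using sp by (simp add: field_simps)
  have e0: "d0 = 2 * \<mu>P / (2-\<alpha>)" unfolding d0_def \<mu>P_def using nPp by (simp add: field_simps)
  have e1: "d1 = s - 2 * (s - \<mu>Q) / (2-\<alpha>)" unfolding d1_def \<mu>Q_def sg using nQp a1
    by (simp add: field_simps)
  have "d1 - d0 = s - 2 * (s - (\<mu>Q - \<mu>P)) / (2-\<alpha>)" unfolding e0 e1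
  proof -
    have "\<And>X::real. s - 2*(s-\<mu>Q)/X - 2*\<mu>P/X = s - 2*(s-(\<mu>Q-\<mu>P))/X"
      by (simp add: diff_divide_distrib add_divide_distrib algebra_simps)
    thus "s - 2 * (s - \<mu>Q) / (2 - \<alpha>) - 2 * \<mu>P / (2 - \<alpha>) = s - 2 * (s - (\<mu>Q - \<mu>P)) / (2 - \<alpha>)" .
  qed
  also have "\<dots> \<ge> s - 2 * (s - \<alpha> * s) / (2-\<alpha>)"
    using gap a1 by (intro diff_left_mono divide_right_mono) auto
  finally have G1: "d1 - d0 \<ge> s - 2 * (s - \<alpha> * s) / (2-\<alpha>)" .
  have "\<alpha> / 4 * s = \<alpha> * s / 4" by simp
  also have "\<dots> \<le> \<alpha> * s / (2 - \<alpha>)"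
    using a0 a1 sp by (intro divide_left_mono) auto
  also have "\<dots> = s - 2 * (s - \<alpha> * s) / (2-\<alpha>)" using a1 by (simp add: field_simps)
  finally have G2: "\<alpha> / 4 * s \<le> s - 2 * (s - \<alpha> * s) / (2-\<alpha>)" .
  have G: "d1 - d0 \<ge> \<alpha> / 4 * real (card S)" using G1 G2 unfolding s_def by linarith
  have H0: "\<forall>h\<in>T0. real (edges_between E S {h}) \<le> d0" unfolding T0_def f_def by simp
  have H1: "\<forall>h\<in>T1. real (edges_between E S {h}) \<ge> d1" unfolding T1_def d1_def g_def f_def by auto
  show ?thesis
    apply (rule exI[of _ S], rule exI[of _ T0], rule exI[of _ T1], rule exI[of _ d0], rule exI[of _ d1])
    using SB Sc C0 C1 G H0 H1 PT QT unfolding T0_def T1_def by auto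
qed

theorem claim4:
  fixes A :: "'a set" and B :: "'b set" and E :: "('a \<times> 'b) set" and \<alpha> :: real and T :: "'a set"
  assumes "finite A" and "finite B" and "E \<subseteq> A \<times> B"
    and "0 < \<alpha>" and "\<alpha> < 1"
    and "T \<subseteq> A"
    and "separable A B E \<alpha> T"
  shows "\<exists>S T0 T1 (d0::real) (d1::real).
           S \<subseteq> B \<and> real (card S) \<ge> \<alpha> * real (card B) \<and>
           T0 \<subseteq> T \<and> T1 \<subseteq> T \<and>
           real (card T0) \<ge> 1/2 * \<alpha>^2 * real (card T) \<and>
           real (card T1) \<ge> 1/2 * \<alpha>^2 * real (card T) \<and>
           d1 - d0 \<ge> \<alpha> / 4 * real (card S) \<and>
           (\<forall>h\<in>T0. real (edges_between E S {h}) \<le> d0) \<and>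
           (\<forall>h\<in>T1. real (edges_between E S {h}) \<ge> d1)"
proof -
  obtain S T0 T1 where h: "S \<subseteq> B" "real (card S) \<ge> \<alpha> * real (card B)"
    "T0 \<subseteq> T" "T1 \<subseteq> T" "real (card T0) \<ge> \<alpha> * real (card T)" "real (card T1) \<ge> \<alpha> * real (card T)"
    "\<bar>density E S T0 - density E S T1\<bar> \<ge> \<alpha>"
    using assms(7) unfolding separable_def by blast
  show ?thesis
  proof (cases "density E S T1 - density E S T0 \<ge> \<alpha>")
    case True
    show ?thesis by (rule core[OF assms(1-6) h(1,2,3,4,5,6) True])
  next
    case False
    hence "density E S T0 - density E S T1 \<ge> \<alpha>" using h(7) by linarith
    thus ?thesis by (rule core[OF assms(1-6) h(1,2,4,3,6,5)])
  qed
qed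

end
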